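(* Let $n\ge 1$, let $K=\mathbb{R}^n_+=\{x\in\mathbb{R}^n: x_i\ge 0,\ i=1,\dots,n\}$, and let $\bar x\in K\cap\mathbb{Z}^n$. Then the recession cone of $Q(\bar x)$ is $K$, and $Q(\bar x)$ is a full-dimensional polyhedron. Moreover, if $\bar x\neq 0$ and $\ell:=\ell(\bar x)$, then the extreme points of $Q(\bar x)$ are precisely the points $v^1,\dots,v^{\ell}$, where $v^{\ell}=\bar x$ and, for $k=1,\dots,\ell-1$, $v^k$ is the point with entries $v^k_i=\bar x_i$ for $i=1,\dots,k-1$, $v^k_k=\bar x_k+1$, and $v^k_i=0$ for $i=k+1,\dots,n$.
   Context: The lexicographic order on $\mathbb{R}^n$ (associated with the standard basis): for $x,y\in\mathbb{R}^n$, $x\prec y$ iff $x\neq y$ and $x_i<y_i$, where $i$ is the smallest index with $x_i\neq y_i$; $\preceq,\succ,\succeq$ have the obvious meaning. For $\bar x\in K\cap\mathbb{Z}^n$, $Q(\bar x):=\operatorname{conv}\{x\in K\cap\mathbb{Z}^n: x\succeq\bar x\}$. For $\bar x\in K\setminus\{0\}$, the leading index $\ell(\bar x)$ is the largest index $i$ with $\bar x_i>0$. *)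

theory Defs
  imports "HOL-Analysis.Analysis"
begin

text \<open>Vectors of R^n are modelled as real ^ 'n, where the index type 'n is finite
  and well-ordered; the order on 'n plays the role of the standard order on {1..n}.\<close>

definition nonneg_orthant :: "(real ^ 'n) set" where
  "nonneg_orthant = {x. \<forall>i. x $ i \<ge> 0}"

definition int_points :: "(real ^ 'n) set" where
  "int_points = {x. \<forall>i. x $ i \<in> \<int>}"

definition lex_less :: "real ^ 'n::{finite,wellorder} \<Rightarrow> real ^ 'n::{finite,wellorder} \<Rightarrow> bool" where
  "lex_less x y \<longleftrightarrow> x \<noteq> y \<and> x $ (LEAST i. x $ i \<noteq> y $ i) < y $ (LEAST i. x $ i \<noteq> y $ i)"

definition lex_le :: "real ^ 'n::{finite,wellorder} \<Rightarrow> real ^ 'n::{finite,wellorder} \<Rightarrow> bool" where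
  "lex_le x y \<longleftrightarrow> x = y \<or> lex_less x y"

definition Qset :: "real ^ 'n::{finite,wellorder} \<Rightarrow> (real ^ 'n::{finite,wellorder}) set" where
  "Qset xb = convex hull {x. x \<in> nonneg_orthant \<inter> int_points \<and> lex_le xb x}"

definition leading_index :: "real ^ 'n::{finite,wellorder} \<Rightarrow> 'n::{finite,wellorder}" where
  "leading_index x = (GREATEST i. x $ i > 0)"

definition rec_cone :: "'a::real_vector set \<Rightarrow> 'a set" where
  "rec_cone C = {d. \<forall>x\<in>C. \<forall>t::real. t \<ge> 0 \<longrightarrow> x + t *\<^sub>R d \<in> C}"

definition vpt :: "real ^ 'n::{finite,wellorder} \<Rightarrow> 'n::{finite,wellorder} \<Rightarrow> real ^ 'n::{finite,wellorder}" where
  "vpt xb k = (\<chi> i. if i < k then xb $ i else if i = k then xb $ k + 1 else 0)"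

end

theory Submission
  imports Defs "HOL-Analysis.Analysis"
begin

definition lexnn :: "real ^ 'n::{finite,wellorder} \<Rightarrow> bool" where
  "lexnn z \<longleftrightarrow> z = 0 \<or> (\<exists>i. (\<forall>j<i. z$j = 0) \<and> 0 < z$i)"

lemma lex_less_iff:
  "lex_less x y \<longleftrightarrow> (\<exists>i. (\<forall>j<i. x$j = y$j) \<and> x$i < y$i)"
proof
  assume "lex_less x y"
  then have ne: "x \<noteq> y" and lt: "x $ (LEAST i. x $ i \<noteq> y $ i) < y $ (LEAST i. x $ i \<noteq> y $ i)"
    by (auto simp: lex_less_def)
  have "\<forall>j<(LEAST i. x $ i \<noteq> y $ i). x$j = y$j"
    using not_less_Least by blast
  with lt show "\<exists>i. (\<forall>j<i. x$j = y$j) \<and> x$i < y$i" by blast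
next
  assume "\<exists>i. (\<forall>j<i. x$j = y$j) \<and> x$i < y$i"
  then obtain i where i: "\<forall>j<i. x$j = y$j" "x$i < y$i" by blast
  have L: "(LEAST i. x $ i \<noteq> y $ i) = i"
    by (rule Least_equality) (use i in \<open>auto simp: not_less[symmetric]\<close>)
  have "x \<noteq> y" using i by auto
  then show "lex_less x y" using i L by (simp add: lex_less_def)
qed

lemma lex_le_iff: "lex_le a b \<longleftrightarrow> lexnn (b - a)"
  unfolding lex_le_def lex_less_iff lexnn_def
  by (auto simp: algebra_simps) (metis)+

lemma lexnn_add:
  assumes "lexnn z" "lexnn w" shows "lexnn (z + w)"
proof (cases "z = 0 \<or> w = 0")
  case True then show ?thesis using assms by auto
next
  case False
  then obtain i k where i: "\<forall>j<i. z$j = 0" "0 < z$i" and k: "\<forall>j<k. w$j = 0" "0 < w$k"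
    using assms by (auto simp: lexnn_def)
  have "\<exists>m. (\<forall>j<m. (z+w)$j = 0) \<and> 0 < (z+w)$m"
  proof (cases i k rule: linorder_cases)
    case less then show ?thesis using i k by (intro exI[of _ i]) auto
  next
    case equal then show ?thesis using i k by (intro exI[of _ i]) auto
  next
    case greater then show ?thesis using i k by (intro exI[of _ k]) auto
  qed
  then show ?thesis by (simp add: lexnn_def)
qed

lemma lexnn_scale: assumes "lexnn z" "0 \<le> c" shows "lexnn (c *\<^sub>R z)"
proof (cases "c = 0")
  case True then show ?thesis by (simp add: lexnn_def)
next
  case False
  with assms show ?thesis unfolding lexnn_def by (auto intro: mult_pos_pos)
qed

lemma lexnn_0 [simp]: "lexnn 0" by (simp add: lexnn_def)

lemma lexnn_sum: "finite I \<Longrightarrow> (\<And>i. i \<in> I \<Longrightarrow> lexnn (f i)) \<Longrightarrow> lexnn (sum f I)"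
  by (induction I rule: finite_induct) (auto intro: lexnn_add)

lemma lexnn_antisym: assumes "lexnn z" "lexnn (-z)" shows "z = 0"
proof (rule ccontr)
  assume nz: "z \<noteq> 0"
  then obtain i k where i: "\<forall>j<i. z$j = 0" "0 < z$i" and k: "\<forall>j<k. (-z)$j = 0" "0 < (-z)$k"
    using assms by (auto simp: lexnn_def)
  show False
    by (cases i k rule: linorder_cases) (use i k in auto)
qed


lemma shift_hull:
  fixes T :: "'a::real_vector set"
  assumes x: "x \<in> convex hull T" and cl: "\<And>s m. s \<in> T \<Longrightarrow> s + real m *\<^sub>R e \<in> T" and t: "0 \<le> t"
  shows "x + t *\<^sub>R e \<in> convex hull T"
proof -
  have nat_shift: "x + real m *\<^sub>R e \<in> convex hull T" for m
  proof -
    have "x + real m *\<^sub>R e \<in> (+) (real m *\<^sub>R e) ` (convex hull T)" using x by (auto simp: add.commute)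
    also have "\<dots> = convex hull ((+) (real m *\<^sub>R e) ` T)" by (simp add: convex_hull_translation)
    also have "\<dots> \<subseteq> convex hull T"
      by (rule hull_mono) (use cl in \<open>auto simp: add.commute\<close>)
    finally show ?thesis .
  qed
  define m where "m = nat \<lfloor>t\<rfloor>"
  define th where "th = t - real m"
  have m: "real m \<le> t" "t < real m + 1" using t by (auto simp: m_def)
  have th: "0 \<le> th" "th \<le> 1" using m by (auto simp: th_def)
  have eq: "x + t *\<^sub>R e = (1 - th) *\<^sub>R (x + real m *\<^sub>R e) + th *\<^sub>R (x + real (Suc m) *\<^sub>R e)"
    by (simp add: th_def algebra_simps)
  show ?thesis unfolding eq
    by (rule convexD_alt[OF convex_convex_hull nat_shift nat_shift th])
qed

lemma shift_hull_K:
  fixes T :: "(real ^ 'n) set"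
  assumes x: "x \<in> convex hull T" and cl: "\<And>s m i. s \<in> T \<Longrightarrow> s + real m *\<^sub>R axis i 1 \<in> T"
    and d: "d \<in> nonneg_orthant"
  shows "x + d \<in> convex hull T"
proof -
  have dn: "0 \<le> d$i" for i using d by (simp add: nonneg_orthant_def)
  have "x + (\<Sum>i\<in>I. (d$i) *\<^sub>R axis i 1) \<in> convex hull T" if "finite I" for I
    using that
  proof (induction I rule: finite_induct)
    case empty then show ?case using x by simp
  next
    case (insert j I)
    have "x + (\<Sum>i\<in>I. (d$i) *\<^sub>R axis i 1) + (d$j) *\<^sub>R axis j 1 \<in> convex hull T"
      by (rule shift_hull[OF insert.IH cl dn])
    moreover have "x + (\<Sum>i\<in>insert j I. (d$i) *\<^sub>R axis i 1) = x + (\<Sum>i\<in>I. (d$i) *\<^sub>R axis i 1) + (d$j) *\<^sub>R axis j 1"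
      using insert.hyps by (simp add: add.commute add.left_commute)
    ultimately show ?case by (simp only: add.assoc)
  qed
  from this[of UNIV] have "x + (\<Sum>i\<in>UNIV. (d$i) *\<^sub>R axis i 1) \<in> convex hull T" by simp
  moreover have "(\<Sum>i\<in>UNIV. (d$i) *\<^sub>R axis i (1::real)) = d"
    unfolding scalar_mult_eq_scaleR[symmetric] by (rule basis_expansion)
  ultimately show ?thesis by simp
qed

definition Sset :: "real ^ 'n::{finite,wellorder} \<Rightarrow> (real ^ 'n::{finite,wellorder}) set" where
  "Sset xb = {x. x \<in> nonneg_orthant \<inter> int_points \<and> lex_le xb x}"

lemma Qset_Sset: "Qset xb = convex hull Sset xb"
  by (simp add: Qset_def Sset_def)

lemma lexnn_axis: "0 \<le> c \<Longrightarrow> lexnn (c *\<^sub>R axis i 1)"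
proof (cases "c = 0")
  case False
  assume "0 \<le> c"
  then show ?thesis using False
    by (auto simp: lexnn_def axis_def intro!: exI[of _ i])
qed (simp)

lemma Sset_shift: "s \<in> Sset xb \<Longrightarrow> s + real m *\<^sub>R axis i 1 \<in> Sset xb"
proof -
  assume s: "s \<in> Sset xb"
  have "lexnn ((s - xb) + real m *\<^sub>R axis i 1)"
    using s by (intro lexnn_add lexnn_axis) (auto simp: Sset_def lex_le_iff)
  moreover have "s + real m *\<^sub>R axis i 1 \<in> nonneg_orthant \<inter> int_points"
    using s by (auto simp: Sset_def nonneg_orthant_def int_points_def axis_def)
  ultimately show ?thesis by (simp add: Sset_def lex_le_iff algebra_simps)
qed

lemma Qset_plus_K: "x \<in> Qset xb \<Longrightarrow> d \<in> nonneg_orthant \<Longrightarrow> x + d \<in> Qset xb"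
  unfolding Qset_Sset by (rule shift_hull_K) (auto intro: Sset_shift)

lemma convex_K: "convex nonneg_orthant"
  by (auto simp: convex_def nonneg_orthant_def)

lemma Qset_sub_K: "Qset xb \<subseteq> nonneg_orthant"
  unfolding Qset_Sset by (rule hull_minimal) (auto simp: Sset_def convex_K)

lemma xb_in_Sset: "xb \<in> nonneg_orthant \<inter> int_points \<Longrightarrow> xb \<in> Sset xb"
  by (simp add: Sset_def lex_le_def)

lemma rec_cone_Qset:
  assumes "xb \<in> nonneg_orthant \<inter> int_points"
  shows "rec_cone (Qset xb) = nonneg_orthant"
proof
  show "nonneg_orthant \<subseteq> rec_cone (Qset xb)"
    by (auto simp: rec_cone_def nonneg_orthant_def intro!: Qset_plus_K)
  show "rec_cone (Qset xb) \<subseteq> nonneg_orthant"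
  proof
    fix d assume d: "d \<in> rec_cone (Qset xb)"
    have xQ: "xb \<in> Qset xb" using xb_in_Sset[OF assms] by (simp add: Qset_Sset hull_inc)
    show "d \<in> nonneg_orthant" unfolding nonneg_orthant_def
    proof (clarify, rule ccontr)
      fix i assume "\<not> 0 \<le> d $ i"
      then have neg: "d$i < 0" by simp
      define t where "t = (xb$i + 1) / (- d$i)"
      have x0: "0 \<le> xb$i" using assms by (auto simp: nonneg_orthant_def)
      have t0: "0 \<le> t" using neg x0 unfolding t_def by (intro divide_nonneg_pos) auto
      have "xb + t *\<^sub>R d \<in> Qset xb" using d xQ t0 by (auto simp: rec_cone_def)
      then have "0 \<le> xb$i + t * d$i" using Qset_sub_K by (force simp: nonneg_orthant_def)
      moreover have "t * d$i = - (xb$i + 1)" using neg by (simp add: t_def field_simps)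
      ultimately show False by simp
    qed
  qed
qed


lemma face_lex:
  fixes T :: "(real ^ 'n::{finite,wellorder}) set"
  assumes hT: "\<And>s. s \<in> T \<Longrightarrow> (\<forall>i>k. s$i = 0) \<Longrightarrow> lexnn (s - v)"
    and TK: "T \<subseteq> nonneg_orthant" and x: "x \<in> convex hull T" and x0: "\<forall>i>k. x$i = 0"
  shows "lexnn (x - v)"
proof -
  obtain S u where S: "finite S" "S \<subseteq> T" "\<forall>y\<in>S. 0 \<le> u y" "sum u S = 1"
    and xs: "(\<Sum>y\<in>S. u y *\<^sub>R y) = x"
    using x unfolding convex_hull_explicit by blast
  have "x - v = (\<Sum>y\<in>S. u y *\<^sub>R y) - (\<Sum>y\<in>S. u y) *\<^sub>R v" using xs S(4) by simp
  also have "\<dots> = (\<Sum>y\<in>S. u y *\<^sub>R (y - v))"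
    by (simp add: scaleR_sum_left sum_subtractf scaleR_diff_right)
  finally have eq: "x - v = (\<Sum>y\<in>S. u y *\<^sub>R (y - v))" .
  have "lexnn (u y *\<^sub>R (y - v))" if y: "y \<in> S" for y
  proof (cases "u y = 0")
    case True then show ?thesis by simp
  next
    case False
    have yi: "y $ i = 0" if i: "i > k" for i
    proof -
      have "x$i = (\<Sum>y\<in>S. u y * y$i)" unfolding xs[symmetric] sum_component by simp
      then have sum0: "(\<Sum>y\<in>S. u y * y$i) = 0" using x0 i by simp
      have nonneg: "\<forall>z\<in>S. 0 \<le> u z * z$i"
      proof
        fix z assume "z \<in> S"
        then have "0 \<le> u z" "0 \<le> z$i" using S TK unfolding nonneg_orthant_def by blast+
        then show "0 \<le> u z * z$i" by simp
      qed
      have "\<forall>z\<in>S. u z * z$i = 0" by (rule iffD1[OF sum_nonneg_eq_0_iff[OF S(1) bspec[OF nonneg]] sum0])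
      then have "u y * y$i = 0" using y by blast
      then show ?thesis using False by simp
    qed
    have "lexnn (y - v)"
    proof (rule hT)
      show "y \<in> T" using S(2) y by blast
      show "\<forall>i>k. y$i = 0" using yi by blast
    qed
    then show ?thesis using S(3) y by (intro lexnn_scale) auto
  qed
  then show ?thesis unfolding eq by (intro lexnn_sum S(1))
qed

lemma extreme_lex:
  fixes P :: "(real ^ 'n::{finite,wellorder}) set"
  assumes vP: "v \<in> P" and PK: "P \<subseteq> nonneg_orthant"
    and hP: "\<And>x. x \<in> P \<Longrightarrow> (\<forall>i>k. x$i = 0) \<Longrightarrow> lexnn (x - v)"
    and v0: "\<forall>i>k. v$i = 0"
  shows "v extreme_point_of P"
  unfolding extreme_point_of_def
proof (intro conjI vP ballI notI)
  fix a b assume a: "a \<in> P" and b: "b \<in> P" and vs: "v \<in> open_segment a b"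
  then obtain u where ab: "a \<noteq> b" and u: "0 < u" "u < 1" and veq: "v = (1 - u) *\<^sub>R a + u *\<^sub>R b"
    by (auto simp: in_segment)
  have a0: "a$i = 0" and b0: "b$i = 0" if i: "i > k" for i
  proof -
    have "0 = (1-u) * a$i + u * b$i" using v0 i veq by simp
    moreover have "0 \<le> a$i" "0 \<le> b$i" using a b PK by (auto simp: nonneg_orthant_def)
    ultimately have "(1-u) * a$i = 0" "u * b$i = 0" using u
      by (smt (verit) mult_nonneg_nonneg)+
    then show "a$i = 0" "b$i = 0" using u by auto
  qed
  have la: "lexnn (a - v)" using hP[OF a] a0 by blast
  have lb: "lexnn (b - v)" using hP[OF b] b0 by blast
  have sum0: "(1-u) *\<^sub>R (a - v) + u *\<^sub>R (b - v) = 0"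
    using veq by (simp add: algebra_simps)
  have l1: "lexnn ((1-u) *\<^sub>R (a - v))" using la u by (intro lexnn_scale) auto
  have l2: "lexnn (- ((1-u) *\<^sub>R (a - v)))"
  proof -
    have "- ((1-u) *\<^sub>R (a - v)) = u *\<^sub>R (b - v)" using sum0 by (simp only: neg_eq_iff_add_eq_0)
    then show ?thesis using lb u by (simp add: lexnn_scale)
  qed
  have z1: "(1-u) *\<^sub>R (a - v) = 0" using lexnn_antisym[OF l1 l2] .
  then have "a = v" using u by simp
  moreover have "u *\<^sub>R (b - v) = 0" using sum0 z1 by simp
  then have "b = v" using u by simp
  ultimately show False using ab by simp
qed

lemma ints_step: "(a::real) \<in> \<int> \<Longrightarrow> b \<in> \<int> \<Longrightarrow> a < b \<Longrightarrow> a + 1 \<le> b"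
  by (elim Ints_cases) simp

lemma Qset_repr:
  fixes xb :: "real ^ 'n::{finite,wellorder}"
  assumes fV: "finite V" and VS: "V \<subseteq> Sset xb"
    and dom: "\<And>s. s \<in> Sset xb \<Longrightarrow> \<exists>v\<in>V. \<forall>i. v$i \<le> s$i"
  shows "Qset xb = {a + d | a d. a \<in> convex hull V \<and> d \<in> nonneg_orthant}"
proof
  show "Qset xb \<subseteq> {a + d | a d. a \<in> convex hull V \<and> d \<in> nonneg_orthant}"
    unfolding Qset_Sset
  proof (rule hull_minimal)
    show "Sset xb \<subseteq> {a + d | a d. a \<in> convex hull V \<and> d \<in> nonneg_orthant}"
    proof
      fix s assume s: "s \<in> Sset xb"
      then obtain v where v: "v \<in> V" "\<forall>i. v$i \<le> s$i" using dom by blast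
      have "s = v + (s - v)" by simp
      moreover have "s - v \<in> nonneg_orthant" using v by (auto simp: nonneg_orthant_def)
      ultimately show "s \<in> {a + d | a d. a \<in> convex hull V \<and> d \<in> nonneg_orthant}"
        using v(1) by (blast intro: hull_inc)
    qed
    show "convex {a + d | a d. a \<in> convex hull V \<and> d \<in> nonneg_orthant}"
    proof (rule convexI)
      fix x y :: "real ^ 'n::{finite,wellorder}" and u w :: real
      assume x: "x \<in> {a + d | a d. a \<in> convex hull V \<and> d \<in> nonneg_orthant}"
        and y: "y \<in> {a + d | a d. a \<in> convex hull V \<and> d \<in> nonneg_orthant}"
        and uw: "0 \<le> u" "0 \<le> w" "u + w = 1"
      obtain a1 d1 where x1: "x = a1 + d1" "a1 \<in> convex hull V" "d1 \<in> nonneg_orthant" using x by blast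
      obtain a2 d2 where y1: "y = a2 + d2" "a2 \<in> convex hull V" "d2 \<in> nonneg_orthant" using y by blast
      note h = x1(2,3) y1(2,3) uw
      have "u *\<^sub>R (a1 + d1) + w *\<^sub>R (a2 + d2) = (u *\<^sub>R a1 + w *\<^sub>R a2) + (u *\<^sub>R d1 + w *\<^sub>R d2)"
        by (simp add: algebra_simps)
      moreover have "u *\<^sub>R a1 + w *\<^sub>R a2 \<in> convex hull V"
        using h by (intro convexD[OF convex_convex_hull]) auto
      moreover have "u *\<^sub>R d1 + w *\<^sub>R d2 \<in> nonneg_orthant"
        using h by (intro convexD[OF convex_K]) auto
      ultimately show "u *\<^sub>R x + w *\<^sub>R y \<in> {a + d | a d. a \<in> convex hull V \<and> d \<in> nonneg_orthant}"
        unfolding x1(1) y1(1) by blast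
    qed
  qed
  show "{a + d | a d. a \<in> convex hull V \<and> d \<in> nonneg_orthant} \<subseteq> Qset xb"
  proof clarify
    fix a d :: "real ^ 'n::{finite,wellorder}" assume "a \<in> convex hull V" "d \<in> nonneg_orthant"
    moreover have "convex hull V \<subseteq> Qset xb" unfolding Qset_Sset using VS by (rule hull_mono)
    ultimately show "a + d \<in> Qset xb" by (blast intro: Qset_plus_K)
  qed
qed


lemma lead_props:
  fixes xb :: "real ^ 'n::{finite,wellorder}"
  assumes K: "xb \<in> nonneg_orthant" and nz: "xb \<noteq> 0"
  shows "0 < xb $ leading_index xb" "\<And>i. 0 < xb$i \<Longrightarrow> i \<le> leading_index xb"
    "\<And>i. leading_index xb < i \<Longrightarrow> xb$i = 0"
proof -
  obtain j where "xb$j \<noteq> 0" using nz by (auto simp: vec_eq_iff)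
  then have j: "0 < xb$j" using K by (auto simp: nonneg_orthant_def less_le)
  have L: "leading_index xb = Max {i. 0 < xb$i}"
    unfolding leading_index_def using j by (intro Greatest_Max) auto
  have ne: "{i. 0 < xb$i} \<noteq> {}" using j by blast
  show "0 < xb $ leading_index xb" using Max_in[OF finite ne] L by simp
  show le: "\<And>i. 0 < xb$i \<Longrightarrow> i \<le> leading_index xb" using L by simp
  show "\<And>i. leading_index xb < i \<Longrightarrow> xb$i = 0"
  proof -
    fix i assume "leading_index xb < i"
    then have "\<not> 0 < xb$i" using le by (meson leD)
    moreover have "0 \<le> xb$i" using K by (simp add: nonneg_orthant_def)
    ultimately show "xb$i = 0" by simp
  qed
qed

lemma vpt_comp: "vpt xb k $ i = (if i < k then xb $ i else if i = k then xb $ k + 1 else 0)"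
  by (simp add: vpt_def)

lemma vpt_S:
  assumes "xb \<in> nonneg_orthant \<inter> int_points"
  shows "vpt xb k \<in> Sset xb"
proof -
  have "vpt xb k \<in> nonneg_orthant"
    using assms by (auto simp: nonneg_orthant_def vpt_comp intro: add_nonneg_nonneg)
  moreover have "vpt xb k \<in> int_points"
    using assms by (auto simp: int_points_def vpt_comp)
  moreover have "lex_less xb (vpt xb k)"
    unfolding lex_less_iff by (intro exI[of _ k]) (simp add: vpt_comp)
  ultimately show ?thesis by (simp add: Sset_def lex_le_def)
qed

lemma S_facts:
  assumes "s \<in> Sset xb"
  shows "s \<in> nonneg_orthant" "s \<in> int_points" "s = xb \<or> (\<exists>j. (\<forall>i<j. xb$i = s$i) \<and> xb$j < s$j)"
  using assms by (auto simp: Sset_def lex_le_def lex_less_iff)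

lemma dominate:
  fixes xb :: "real ^ 'n::{finite,wellorder}"
  assumes xb: "xb \<in> nonneg_orthant \<inter> int_points" and nz: "xb \<noteq> 0" and s: "s \<in> Sset xb"
  shows "\<exists>v\<in>insert xb {vpt xb k | k. k < leading_index xb}. \<forall>i. v$i \<le> s$i"
proof -
  note L = lead_props[of xb]
  have sK: "\<And>i. 0 \<le> s$i" using S_facts(1)[OF s] by (simp add: nonneg_orthant_def)
  consider "s = xb" | j where "\<forall>i<j. xb$i = s$i" "xb$j < s$j" using S_facts(3)[OF s] by blast
  then show ?thesis
  proof cases
    case 1 then show ?thesis by auto
  next
    case (2 j)
    show ?thesis
    proof (cases "j < leading_index xb")
      case True
      have "xb$j + 1 \<le> s$j"
        using 2 xb S_facts(2)[OF s] by (intro ints_step) (auto simp: int_points_def)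
      then have "\<forall>i. vpt xb j $ i \<le> s$i"
        using 2 sK by (auto simp: vpt_comp)
      then show ?thesis using True by blast
    next
      case False
      have "xb$i \<le> s$i" for i
      proof (cases i j rule: linorder_cases)
        case less then show ?thesis using 2 by simp
      next
        case equal then show ?thesis using 2 by simp
      next
        case greater
        then have "leading_index xb < i" using False by simp
        then have "xb$i = 0" using L(3) xb nz by blast
        then show ?thesis using sK by simp
      qed
      then show ?thesis by blast
    qed
  qed
qed

lemma face_S_xb: "s \<in> Sset xb \<Longrightarrow> lexnn (s - xb)"
  by (simp add: Sset_def lex_le_iff)

lemma face_S_vpt:
  fixes xb :: "real ^ 'n::{finite,wellorder}"
  assumes xb: "xb \<in> nonneg_orthant \<inter> int_points" and nz: "xb \<noteq> 0" and s: "s \<in> Sset xb"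
    and k: "k < leading_index xb" and s0: "\<forall>i>k. s$i = 0"
  shows "lexnn (s - vpt xb k)"
proof -
  note L = lead_props[of xb]
  consider "s = xb" | j where "\<forall>i<j. xb$i = s$i" "xb$j < s$j" using S_facts(3)[OF s] by blast
  then show ?thesis
  proof cases
    case 1
    have "s $ leading_index xb = 0" using s0[rule_format, OF k] .
    moreover have "0 < xb $ leading_index xb" using L(1) xb nz by blast
    ultimately show ?thesis using 1 by simp
  next
    case (2 j)
    have xj: "0 \<le> xb$j" using xb by (simp add: nonneg_orthant_def)
    have step: "xb$j + 1 \<le> s$j"
      using 2 xb S_facts(2)[OF s] by (intro ints_step) (auto simp: int_points_def)
    consider "j < k" | "j = k" | "k < j" by (rule linorder_cases)
    then show ?thesis
    proof cases
      case 1
      have "\<forall>i<j. (s - vpt xb k)$i = 0"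
      proof (intro allI impI)
        fix i assume ij: "i < j"
        then have "i < k" using 1 by (rule less_trans)
        then show "(s - vpt xb k)$i = 0" using 2 ij by (simp add: vpt_comp)
      qed
      moreover have "0 < (s - vpt xb k)$j" using 2 1 by (simp add: vpt_comp)
      ultimately have "(\<forall>i<j. (s - vpt xb k)$i = 0) \<and> 0 < (s - vpt xb k)$j" by blast
      then show ?thesis unfolding lexnn_def by blast
    next
      case 3
      have "s$j = 0" using s0[rule_format, OF 3] .
      then show ?thesis using 2 xj by simp
    next
      case jk: 2
      show ?thesis
      proof (cases "s$k = xb$k + 1")
        case True
        have "s = vpt xb k"
        proof (subst vec_eq_iff, intro allI)
          fix i
          show "s$i = vpt xb k $ i"
          proof (cases i k rule: linorder_cases)
            case less then show ?thesis using 2 jk by (simp add: vpt_comp)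
          next
            case equal then show ?thesis using True by (simp add: vpt_comp)
          next
            case greater
            then have "\<not> i < k" "i \<noteq> k" by auto
            then show ?thesis using s0[rule_format, OF greater] by (simp add: vpt_comp)
          qed
        qed
        then show ?thesis by simp
      next
        case False
        have "(\<forall>i<k. (s - vpt xb k)$i = 0) \<and> 0 < (s - vpt xb k)$k"
          using 2 jk step False by (simp add: vpt_comp)
        then show ?thesis unfolding lexnn_def by blast
      qed
    qed
  qed
qed


lemma polyhedron_slice:
  fixes C :: "('a::euclidean_space \<times> real) set"
  assumes "polyhedron C"
  shows "polyhedron {x. (x, 1) \<in> C}"
proof -
  obtain F where F: "finite F" "C = \<Inter>F" "\<forall>h\<in>F. \<exists>a b. a \<noteq> 0 \<and> h = {x. a \<bullet> x \<le> b}"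
    using assms unfolding polyhedron_def by blast
  have eq: "{x. (x, 1) \<in> C} = \<Inter> ((\<lambda>h. {x. (x, 1) \<in> h}) ` F)" using F(2) by auto
  show ?thesis unfolding eq
  proof (rule polyhedron_Inter)
    show "finite ((\<lambda>h. {x. (x, 1) \<in> h}) ` F)" using F(1) by simp
    fix S assume "S \<in> (\<lambda>h. {x. (x, 1::real) \<in> h}) ` F"
    then obtain h where h: "h \<in> F" "S = {x. (x, 1) \<in> h}" by blast
    then obtain a b where ab: "h = {x. a \<bullet> x \<le> b}" using F(3) by blast
    have "S = {x. fst a \<bullet> x \<le> b - snd a}"
      using h ab by (cases a) (auto simp: algebra_simps)
    then show "polyhedron S" by (simp add: polyhedron_halfspace_le)
  qed
qed

lemma cch_sum:
  assumes "finite I" "\<And>i. i \<in> I \<Longrightarrow> 0 \<le> c i" "\<And>i. i \<in> I \<Longrightarrow> f i \<in> W"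
  shows "(\<Sum>i\<in>I. c i *\<^sub>R f i) \<in> convex_cone hull W"
  using assms
proof (induction I rule: finite_induct)
  case empty then show ?case by (simp add: convex_cone_hull_contains_0)
next
  case (insert j I)
  have "c j *\<^sub>R f j \<in> convex_cone hull W"
    using insert.prems by (intro convex_cone_hull_mul hull_inc) auto
  moreover have "(\<Sum>i\<in>I. c i *\<^sub>R f i) \<in> convex_cone hull W" using insert by auto
  ultimately show ?case using insert.hyps by (simp add: convex_cone_hull_add)
qed

lemma convex_cone_K: "convex_cone nonneg_orthant"
  unfolding convex_cone_iff by (auto simp: nonneg_orthant_def)

lemma polyhedron_repr:
  fixes V :: "(real ^ 'n) set"
  assumes fV: "finite V" and ne: "V \<noteq> {}"
  shows "polyhedron {a + d | a d. a \<in> convex hull V \<and> d \<in> nonneg_orthant}"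
proof -
  define A where "A = V \<times> {1::real}"
  define B where "B = (\<lambda>i. (axis i (1::real), 0::real)) ` (UNIV :: 'n set)"
  have fW: "finite (A \<union> B)" using fV by (simp add: A_def B_def)
  have Apos: "A \<noteq> {}" using ne by (simp add: A_def)
  have cchB: "convex_cone hull B = nonneg_orthant \<times> {0}"
  proof
    show "convex_cone hull B \<subseteq> nonneg_orthant \<times> {0}"
    proof (rule hull_minimal)
      show "B \<subseteq> nonneg_orthant \<times> {0}" by (auto simp: B_def nonneg_orthant_def axis_def)
      show "convex_cone (nonneg_orthant \<times> {0})"
        by (intro convex_cone_Times convex_cone_K convex_cone_singleton)
    qed
    show "nonneg_orthant \<times> {0} \<subseteq> convex_cone hull B"
    proof clarify
      fix d :: "real ^ 'n" assume d: "d \<in> nonneg_orthant"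
      have "(\<Sum>i\<in>UNIV. (d$i) *\<^sub>R (axis i (1::real), 0::real)) \<in> convex_cone hull B"
        by (rule cch_sum) (use d in \<open>auto simp: B_def nonneg_orthant_def\<close>)
      moreover have "(\<Sum>i\<in>UNIV. (d$i) *\<^sub>R (axis i (1::real), 0::real)) = (d, 0)"
      proof -
        have "fst (\<Sum>i\<in>UNIV. (d$i) *\<^sub>R (axis i (1::real), 0::real)) = (\<Sum>i\<in>UNIV. (d$i) *\<^sub>R axis i 1)"
          by (simp add: fst_sum)
        also have "\<dots> = d" unfolding scalar_mult_eq_scaleR[symmetric] by (rule basis_expansion)
        finally show ?thesis by (simp add: prod_eq_iff snd_sum)
      qed
      ultimately show "(d, 0) \<in> convex_cone hull B" by simp
    qed
  qed
  have cchA: "convex_cone hull A = (\<Union>x \<in> (convex hull V) \<times> {1}. \<Union>c\<in>{0..}. {c *\<^sub>R x})"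
    using convex_cone_hull_convex_hull_nonempty[OF Apos] by (simp add: A_def convex_hull_Times)
  have eq: "{x. (x, 1) \<in> convex_cone hull (A \<union> B)} = {a + d | a d. a \<in> convex hull V \<and> d \<in> nonneg_orthant}"
  proof (intro set_eqI iffI)
    fix x assume "x \<in> {x. (x, 1) \<in> convex_cone hull (A \<union> B)}"
    then have "(x, 1) \<in> (\<Union>p \<in> convex_cone hull A. \<Union>q \<in> convex_cone hull B. {p + q})"
      by (simp add: convex_cone_hull_Un)
    then obtain p q where p: "p \<in> convex_cone hull A" and q: "q \<in> convex_cone hull B" and pq: "(x, 1) = p + q"
      by blast
    obtain y c where y: "y \<in> (convex hull V) \<times> {1}" "c \<in> {0..}" "p = c *\<^sub>R y"
      using p unfolding cchA by blast
    obtain a where "y = (a, 1)" "a \<in> convex hull V" using y(1) by (cases y) auto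
    then have a: "a \<in> convex hull V" "0 \<le> c" "p = c *\<^sub>R (a, 1)" using y by auto
    obtain d where d: "d \<in> nonneg_orthant" "q = (d, 0)" using q cchB by blast
    have "c = 1" using pq a d by simp
    then have "x = a + d" using pq a d by simp
    then show "x \<in> {a + d | a d. a \<in> convex hull V \<and> d \<in> nonneg_orthant}" using a d by blast
  next
    fix x assume "x \<in> {a + d | a d. a \<in> convex hull V \<and> d \<in> nonneg_orthant}"
    then obtain a d where x: "x = a + d" "a \<in> convex hull V" "d \<in> nonneg_orthant" by blast
    have "(a, 1) \<in> convex_cone hull (A \<union> B)"
    proof -
      have "(a, 1) \<in> convex hull A" using x(2) by (simp add: A_def convex_hull_Times)
      also have "\<dots> \<subseteq> convex_cone hull A" by (rule convex_hull_subset_convex_cone_hull)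
      also have "\<dots> \<subseteq> convex_cone hull (A \<union> B)" by (rule hull_mono) blast
      finally show ?thesis .
    qed
    moreover have "(d, 0) \<in> convex_cone hull (A \<union> B)"
    proof -
      have "(d, 0) \<in> convex_cone hull B" using x(3) cchB by simp
      also have "\<dots> \<subseteq> convex_cone hull (A \<union> B)" by (rule hull_mono) blast
      finally show ?thesis .
    qed
    ultimately have "(a, 1) + (d, 0) \<in> convex_cone hull (A \<union> B)" by (rule convex_cone_hull_add)
    then show "x \<in> {x. (x, 1) \<in> convex_cone hull (A \<union> B)}" using x by simp
  qed
  have "polyhedron {x. (x, 1) \<in> convex_cone hull (A \<union> B)}"
    by (intro polyhedron_slice polyhedron_convex_cone_hull fW)
  then show ?thesis unfolding eq .
qed

lemma mid: fixes a d :: "'a::real_vector"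
  shows "midpoint (a + (1/2) *\<^sub>R d) (a + (3/2) *\<^sub>R d) = a + d"
proof -
  have "(a + (1/2) *\<^sub>R d) + (a + (3/2) *\<^sub>R d) = 2 *\<^sub>R a + (1/2 + 3/2) *\<^sub>R d"
    by (simp only: scaleR_add_left scaleR_2) (simp add: algebra_simps)
  also have "\<dots> = 2 *\<^sub>R (a + d)" by (simp add: scaleR_add_right)
  finally show ?thesis by (simp add: midpoint_def)
qed

theorem lemma1:
  fixes xb :: "real ^ 'n::{finite,wellorder}"
  assumes "xb \<in> nonneg_orthant \<inter> int_points"
  shows "rec_cone (Qset xb) = nonneg_orthant
         \<and> polyhedron (Qset xb)
         \<and> aff_dim (Qset xb) = int CARD('n)
         \<and> (xb \<noteq> 0 \<longrightarrow>
              {v. v extreme_point_of (Qset xb)} =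
                insert xb {vpt xb k | k. k < leading_index xb})"
proof -
  note xb = assms
  have xbS: "xb \<in> Sset xb" using xb_in_Sset[OF xb] .
  have xbQ: "xb \<in> Qset xb" using xbS by (simp add: Qset_Sset hull_inc)
  define V where "V = (if xb = 0 then {xb} else insert xb {vpt xb k | k. k < leading_index xb})"
  have fV: "finite V"
  proof -
    have "{vpt xb k | k. k < leading_index xb} \<subseteq> range (vpt xb)" by blast
    then have "finite {vpt xb k | k. k < leading_index xb}" by (rule finite_subset) simp
    then show ?thesis by (simp add: V_def)
  qed
  have neV: "V \<noteq> {}" by (simp add: V_def)
  have VS: "V \<subseteq> Sset xb" using xbS vpt_S[OF xb] by (auto simp: V_def)
  have dom: "\<exists>v\<in>V. \<forall>i. v$i \<le> s$i" if s: "s \<in> Sset xb" for s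
  proof (cases "xb = 0")
    case True
    then show ?thesis using S_facts(1)[OF s] by (simp add: V_def nonneg_orthant_def)
  next
    case False
    then show ?thesis using dominate[OF xb False s] by (simp add: V_def)
  qed
  have repr: "Qset xb = {a + d | a d. a \<in> convex hull V \<and> d \<in> nonneg_orthant}"
    by (rule Qset_repr[OF fV VS dom])
  have part1: "rec_cone (Qset xb) = nonneg_orthant" by (rule rec_cone_Qset[OF xb])
  have part2: "polyhedron (Qset xb)" unfolding repr by (rule polyhedron_repr[OF fV neV])
  have part3: "aff_dim (Qset xb) = int CARD('n)"
  proof -
    define c where "c = xb + (\<chi> i. 1)"
    have sub: "ball c 1 \<subseteq> Qset xb"
    proof
      fix y assume y: "y \<in> ball c 1"
      have "y - xb \<in> nonneg_orthant" unfolding nonneg_orthant_def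
      proof (clarify)
        fix i
        have "\<bar>(c - y)$i\<bar> \<le> norm (c - y)" by (rule component_le_norm_cart)
        also have "\<dots> < 1" using y by (simp add: dist_norm)
        finally have "\<bar>xb$i + 1 - y$i\<bar> < 1" by (simp add: c_def)
        then show "0 \<le> (y - xb)$i" by simp
      qed
      from Qset_plus_K[OF xbQ this] show "y \<in> Qset xb" by simp
    qed
    have "aff_dim (ball c 1) = int DIM(real ^ 'n::{finite,wellorder})" by (rule aff_dim_open) auto
    then have "int CARD('n) \<le> aff_dim (Qset xb)" using aff_dim_subset[OF sub] by simp
    moreover have "aff_dim (Qset xb) \<le> int CARD('n)" using aff_dim_le_DIM[of "Qset xb"] by simp
    ultimately show ?thesis by simp
  qed
  have part4: "{v. v extreme_point_of (Qset xb)} = insert xb {vpt xb k | k. k < leading_index xb}"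
    if nz: "xb \<noteq> 0"
  proof -
    have V: "V = insert xb {vpt xb k | k. k < leading_index xb}" using nz by (simp add: V_def)
    have QK: "Qset xb \<subseteq> nonneg_orthant" by (rule Qset_sub_K)
    have SK: "Sset xb \<subseteq> nonneg_orthant" using S_facts(1) by blast
    show ?thesis
    proof (intro set_eqI iffI; simp only: mem_Collect_eq)
      fix x assume ex: "x extreme_point_of Qset xb"
      then have "x \<in> Qset xb" by (simp add: extreme_point_of_def)
      then obtain a d where x: "x = a + d" "a \<in> convex hull V" "d \<in> nonneg_orthant"
        unfolding repr by blast
      have d0: "d = 0"
      proof (rule ccontr)
        assume "d \<noteq> 0"
        have hd: "c *\<^sub>R d \<in> nonneg_orthant" if "0 \<le> c" for c
          using x(3) that by (auto simp: nonneg_orthant_def)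
        have p1: "a + (1/2) *\<^sub>R d \<in> Qset xb" unfolding repr using x(2) hd[of "1/2"] by auto
        have p2: "a + (3/2) *\<^sub>R d \<in> Qset xb" unfolding repr using x(2) hd[of "3/2"] by auto
        have "a + (1/2) *\<^sub>R d \<noteq> a + (3/2) *\<^sub>R d" using \<open>d \<noteq> 0\<close> by simp
        then have "midpoint (a + (1/2) *\<^sub>R d) (a + (3/2) *\<^sub>R d) \<in> open_segment (a + (1/2) *\<^sub>R d) (a + (3/2) *\<^sub>R d)"
          by simp
        moreover have "midpoint (a + (1/2) *\<^sub>R d) (a + (3/2) *\<^sub>R d) = x"
          using x(1) mid[of a d] by simp
        ultimately show False using ex p1 p2 by (auto simp: extreme_point_of_def)
      qed
      have sub: "convex hull V \<subseteq> Qset xb" unfolding Qset_Sset using VS by (rule hull_mono)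
      have "x extreme_point_of (convex hull V)"
        using ex x(2) sub d0 x(1) by (auto simp: extreme_point_of_def)
      then have "x \<in> V" by (rule extreme_point_of_convex_hull)
      then show "x \<in> insert xb {vpt xb k | k. k < leading_index xb}" using V by simp
    next
      fix v assume v: "v \<in> insert xb {vpt xb k | k. k < leading_index xb}"
      have vQ: "v \<in> Qset xb" using v VS V unfolding Qset_Sset by (blast intro: hull_inc)
      show "v extreme_point_of Qset xb"
      proof (cases "v = xb")
        case True
        show ?thesis
        proof (rule extreme_lex[OF vQ QK])
          fix x assume xh: "x \<in> Qset xb" and x0: "\<forall>i>leading_index xb. x$i = 0"
          have hT: "lexnn (s - xb)" if "s \<in> Sset xb" "\<forall>i>leading_index xb. s$i = 0" for s
            using face_S_xb[OF that(1)] .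
          show "lexnn (x - v)" unfolding True
            using face_lex[OF hT SK xh[unfolded Qset_Sset] x0] .
        next
          show "\<forall>i>leading_index xb. v$i = 0"
            using lead_props(3)[of xb] xb nz True by blast
        qed
      next
        case False
        then obtain k where k: "k < leading_index xb" "v = vpt xb k" using v by blast
        show ?thesis
        proof (rule extreme_lex[OF vQ QK])
          fix x assume xh: "x \<in> Qset xb" and x0: "\<forall>i>k. x$i = 0"
          have hT: "lexnn (s - vpt xb k)" if "s \<in> Sset xb" "\<forall>i>k. s$i = 0" for s
            using face_S_vpt[OF xb nz that(1) k(1) that(2)] .
          show "lexnn (x - v)" unfolding k(2)
            using face_lex[OF hT SK xh[unfolded Qset_Sset] x0] .
        next
          show "\<forall>i>k. v$i = 0" using k(2) by (auto simp: vpt_comp)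
        qed
      qed
    qed
  qed
  show ?thesis using part1 part2 part3 part4 by blast
qed

end
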